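(* Let $K,G:[0,\infty)\to\mathbb{R}$ be continuous, let $f$ solve $f''+Kf=0$ with $f>0$ on $(0,\infty)$ and $\int_1^\infty f(t)^{-2}dt<\infty$, and let $m$ solve $m''+Gm=0$ with $m(0)=f(0)$, $m'(0)=f'(0)$. Suppose the support of $G-K$ is contained in a bounded interval $[a,b]\subset[1,\infty)$, and assume $\alpha(m)<\infty$. Then $$\int_a^b|Gm-Kf|\,dt\le(\alpha(m)+1)\|G-K\|_2\,\|f|_{[a,b]}\|_2+\alpha(m)\int_a^b|f''|\,dt,$$ $$\int_b^\infty|Gm-Kf|\,dt\le\alpha(m)\int_b^\infty|f''|\,dt,$$ and consequently $$\int_0^\infty|Gm-Kf|\,dt\le\alpha(m)\int_a^\infty|f''|\,dt+(\alpha(m)+1)\|G-K\|_2\,\|f|_{[a,b]}\|_2.$$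
   Context: Notation: $\|G-K\|_2:=\sqrt{\int_0^\infty|G-K|^2dt}$; $\|f|_{[a,b]}\|_2:=\sqrt{\int_a^b f(t)^2dt}$; $\sigma(t):=m(t)/f(t)-1$ for $t>0$; $\alpha(m):=\sup_{t>0}|\sigma(t)|$. *)

theory Defs
  imports "HOL-Analysis.Analysis"
begin

definition sigma_fun :: "(real \<Rightarrow> real) \<Rightarrow> (real \<Rightarrow> real) \<Rightarrow> real \<Rightarrow> real" where
  "sigma_fun m f t = m t / f t - 1"

text \<open>alpha(m) = sup over t > 0 of |sigma(t)| (meaningful when this set is bounded above).\<close>
definition alpha_m :: "(real \<Rightarrow> real) \<Rightarrow> (real \<Rightarrow> real) \<Rightarrow> real" where
  "alpha_m m f = (SUP t\<in>{0<..}. \<bar>sigma_fun m f t\<bar>)"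

definition l2norm_on :: "real set \<Rightarrow> (real \<Rightarrow> real) \<Rightarrow> real" where
  "l2norm_on S g = sqrt (LINT t:S|lborel. (g t)\<^sup>2)"

end

theory Submission
  imports Defs
begin

lemma meas_lem:
  fixes g h :: "real \<Rightarrow> real"
  assumes "continuous_on T h" "S \<in> sets borel" "S \<subseteq> T" "\<And>t. t \<in> S \<Longrightarrow> g t = h t"
  shows "(\<lambda>t. ennreal (g t) * indicator S t) \<in> borel_measurable lborel"
proof -
  have eq: "(\<lambda>t. ennreal (g t) * indicator S t) = (\<lambda>t. ennreal (indicator S t *\<^sub>R h t))"
    using assms(4) by (auto simp: indicator_def)
  have "(\<lambda>t. indicator S t *\<^sub>R h t) \<in> borel_measurable borel"
    by (rule borel_measurable_continuous_on_indicator[OF assms(2) continuous_on_subset[OF assms(1,3)]])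
  then show ?thesis unfolding eq by measurable
qed

lemma l2_lem:
  fixes g :: "real \<Rightarrow> real"
  assumes "continuous_on {a..b} g"
  shows "(\<integral>\<^sup>+ t. (ennreal \<bar>g t\<bar> * indicator {a..b} t)^2 \<partial>lborel) = ennreal (LINT t:{a..b}|lborel. (g t)\<^sup>2)"
proof -
  have ci: "set_integrable lborel {a..b} (\<lambda>t. (g t)\<^sup>2)"
    by (rule borel_integrable_atLeastAtMost') (intro continuous_intros assms)
  have "(\<integral>\<^sup>+ t. (ennreal \<bar>g t\<bar> * indicator {a..b} t)^2 \<partial>lborel) = (\<integral>\<^sup>+ t. ennreal (indicator {a..b} t *\<^sub>R (g t)\<^sup>2) \<partial>lborel)"
    by (rule nn_integral_cong) (auto simp: indicator_def ennreal_power[OF abs_ge_zero])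
  also have "\<dots> = ennreal (LINT t:{a..b}|lborel. (g t)\<^sup>2)"
    unfolding set_lebesgue_integral_def
    by (rule nn_integral_eq_integral) (use ci in \<open>auto simp: set_integrable_def\<close>)
  finally show ?thesis .
qed


lemma cs_lem:
  fixes g h :: "real \<Rightarrow> real"
  assumes cg: "continuous_on {a..b} g" and ch: "continuous_on {a..b} h" and hpos: "\<And>t. t \<in> {a..b} \<Longrightarrow> h t \<ge> 0"
  shows "(\<integral>\<^sup>+ t. ennreal (\<bar>g t\<bar> * h t) * indicator {a..b} t \<partial>lborel)
     \<le> ennreal (sqrt (LINT t:{a..b}|lborel. (g t)\<^sup>2) * sqrt (LINT t:{a..b}|lborel. (h t)\<^sup>2))"
proof -
  define F where "F = (\<lambda>t. ennreal \<bar>g t\<bar> * indicator {a..b} t)"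
  define H where "H = (\<lambda>t. ennreal \<bar>h t\<bar> * indicator {a..b} t)"
  have mF: "F \<in> borel_measurable lborel" unfolding F_def
    by (rule meas_lem[where h="\<lambda>t. \<bar>g t\<bar>"]) (auto intro!: continuous_intros cg)
  have mH: "H \<in> borel_measurable lborel" unfolding H_def
    by (rule meas_lem[where h="\<lambda>t. \<bar>h t\<bar>"]) (auto intro!: continuous_intros ch)
  define A where "A = (LINT t:{a..b}|lborel. (g t)\<^sup>2)"
  define B where "B = (LINT t:{a..b}|lborel. (h t)\<^sup>2)"
  have A0: "A \<ge> 0" unfolding A_def unfolding set_lebesgue_integral_def by (rule Bochner_Integration.integral_nonneg) auto
  have B0: "B \<ge> 0" unfolding B_def unfolding set_lebesgue_integral_def by (rule Bochner_Integration.integral_nonneg) auto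
  have eqX: "(\<integral>\<^sup>+ t. ennreal (\<bar>g t\<bar> * h t) * indicator {a..b} t \<partial>lborel) = (\<integral>\<^sup>+ t. F t * H t \<partial>lborel)"
    unfolding F_def H_def
    by (rule nn_integral_cong) (auto simp: indicator_def hpos ennreal_mult)
  have "(\<integral>\<^sup>+ t. F t * H t \<partial>lborel)\<^sup>2 \<le> (\<integral>\<^sup>+ t. F t ^ 2 \<partial>lborel) * (\<integral>\<^sup>+ t. H t ^ 2 \<partial>lborel)"
    by (rule Cauchy_Schwarz_nn_integral[OF mF mH])
  also have "\<dots> = ennreal A * ennreal B"
    unfolding F_def H_def A_def B_def by (simp add: l2_lem[OF cg] l2_lem[OF ch])
  also have "\<dots> = (ennreal (sqrt A * sqrt B))\<^sup>2"
    using A0 B0 by (simp add: ennreal_mult[symmetric] ennreal_power power_mult_distrib)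
  finally have sq: "(\<integral>\<^sup>+ t. F t * H t \<partial>lborel)\<^sup>2 \<le> (ennreal (sqrt A * sqrt B))\<^sup>2" .
  have "(\<integral>\<^sup>+ t. F t * H t \<partial>lborel) \<le> ennreal (sqrt A * sqrt B)"
  proof (cases "(\<integral>\<^sup>+ t. F t * H t \<partial>lborel)" rule: ennreal_cases)
    case (real x)
    have y0: "sqrt A * sqrt B \<ge> 0" using A0 B0 by simp
    from sq real have "ennreal (x\<^sup>2) \<le> ennreal ((sqrt A * sqrt B)\<^sup>2)"
      by (simp add: ennreal_power y0)
    then have "x\<^sup>2 \<le> (sqrt A * sqrt B)\<^sup>2" using y0 by (simp add: ennreal_le_iff)
    then have "x \<le> sqrt A * sqrt B" using y0 by (rule power2_le_imp_le)
    then show ?thesis using real by simp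
  next
    case top
    with sq have "top \<le> ennreal ((sqrt A * sqrt B)\<^sup>2)" using A0 B0 by (simp add: ennreal_power)
    then show ?thesis by (simp add: top_unique)
  qed
  then show ?thesis unfolding eqX A_def B_def .
qed


lemma ineq_lem:
  fixes u v k C :: real
  assumes "\<bar>k\<bar> \<le> C"
  shows "2 * u * v + 2 * v * (- k * u) \<le> (1+C)*(u\<^sup>2+v\<^sup>2)"
proof -
  have e: "2 * u * v + 2 * v * (- k * u) = (2 * u * v)*(1-k)" by (simp add: algebra_simps)
  have "(2 * u * v)*(1-k) \<le> \<bar>2 * u * v\<bar> * \<bar>1-k\<bar>" by (metis abs_ge_self abs_mult)
  also have "\<dots> \<le> (u\<^sup>2+v\<^sup>2) * (1+C)"
  proof (rule mult_mono)
    show "\<bar>2 * u * v\<bar> \<le> u\<^sup>2+v\<^sup>2"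
      using sum_squares_bound[of u v] sum_squares_bound[of u "-v"] by (auto simp: abs_if algebra_simps)
    show "\<bar>1-k\<bar> \<le> 1+C" using assms by linarith
  qed auto
  finally show ?thesis using e by (simp add: algebra_simps)
qed


lemma uniq_lem:
  fixes K f f' f'' m m' m'' :: "real \<Rightarrow> real" and a c :: real
  assumes contK: "continuous_on {0..} K"
    and df: "\<And>t. t \<ge> 0 \<Longrightarrow> (f has_real_derivative f' t) (at t within {0..})"
    and df': "\<And>t. t \<ge> 0 \<Longrightarrow> (f' has_real_derivative f'' t) (at t within {0..})"
    and dm: "\<And>t. t \<ge> 0 \<Longrightarrow> (m has_real_derivative m' t) (at t within {0..})"
    and dm': "\<And>t. t \<ge> 0 \<Longrightarrow> (m' has_real_derivative m'' t) (at t within {0..})"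
    and ode: "\<And>t. 0 \<le> t \<Longrightarrow> t < a \<Longrightarrow> m'' t - f'' t = - K t * (m t - f t)"
    and m0: "m 0 = f 0" and m'0: "m' 0 = f' 0"
    and c: "0 \<le> c" "c < a"
  shows "m c = f c"
proof -
  have "compact ((\<lambda>s. \<bar>K s\<bar>) ` {0..c})"
    by (intro compact_continuous_image continuous_intros continuous_on_subset[OF contK]) auto
  then obtain C0 where C0: "\<And>s. s \<in> {0..c} \<Longrightarrow> \<bar>K s\<bar> \<le> C0"
    using compact_imp_bounded bounded_iff by (metis (no_types, lifting) abs_abs image_eqI real_norm_def)
  define C where "C = \<bar>C0\<bar>"
  have C: "\<And>s. s \<in> {0..c} \<Longrightarrow> \<bar>K s\<bar> \<le> C" using C0 unfolding C_def by fastforce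
  have C_nn: "C \<ge> 0" unfolding C_def by simp
  define D where "D = 1 + C"
  define h where "h = (\<lambda>s. ((m s - f s)\<^sup>2 + (m' s - f' s)\<^sup>2) * exp (- D * s))"
  define h' where "h' = (\<lambda>s. (2 * (m s - f s) * (m' s - f' s) + 2 * (m' s - f' s) * (m'' s - f'' s)) * exp (- D * s)
      + ((m s - f s)\<^sup>2 + (m' s - f' s)\<^sup>2) * (exp (- D * s) * (- D)))"
  have dh: "(h has_real_derivative h' s) (at s within {0..})" if "s \<ge> 0" for s
    unfolding h_def h'_def
    by (rule derivative_eq_intros refl dm dm' df df' that | simp add: algebra_simps)+
  have h'_nonpos: "h' s \<le> 0" if "0 \<le> s" "s \<le> c" for s
  proof -
    have "m'' s - f'' s = - K s * (m s - f s)" using ode that c by simp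
    then have "2 * (m s - f s) * (m' s - f' s) + 2 * (m' s - f' s) * (m'' s - f'' s)
       \<le> D * ((m s - f s)\<^sup>2 + (m' s - f' s)\<^sup>2)"
      using ineq_lem[OF C[of s], of "m s - f s" "m' s - f' s"] that unfolding D_def by simp
    then have "(2 * (m s - f s) * (m' s - f' s) + 2 * (m' s - f' s) * (m'' s - f'' s)) * exp (- D * s)
       \<le> (D * ((m s - f s)\<^sup>2 + (m' s - f' s)\<^sup>2)) * exp (- D * s)"
      by (rule mult_right_mono) simp
    then show ?thesis unfolding h'_def by (simp add: algebra_simps)
  qed
  have conth: "continuous_on {0..c} h"
    by (rule continuous_on_subset[OF DERIV_continuous_on[OF dh]]) auto
  have "h 0 \<ge> h c"
  proof (rule DERIV_nonpos_imp_decreasing_open[OF c(1) _ conth])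
    fix x assume x: "0 < x" "x < c"
    have "(h has_real_derivative h' x) (at x)"
      using dh[of x] x at_within_interior[of x "{0..}"] by simp
    then show "\<exists>y. (h has_real_derivative y) (at x) \<and> y \<le> 0"
      using h'_nonpos[of x] x by auto
  qed
  moreover have "h 0 = 0" unfolding h_def using m0 m'0 by simp
  ultimately have "((m c - f c)\<^sup>2 + (m' c - f' c)\<^sup>2) * exp (- D * c) \<le> 0" unfolding h_def by simp
  then have "(m c - f c)\<^sup>2 + (m' c - f' c)\<^sup>2 \<le> 0"
    by (simp add: mult_le_0_iff)
  then have "(m c - f c)\<^sup>2 = 0"
    by (smt (verit) zero_le_power2)
  then show ?thesis by simp
qed



theorem lemma2p4:
  fixes K G f f' f'' m m' m'' :: "real \<Rightarrow> real" and a b :: real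
  assumes contK: "continuous_on {0..} K"
    and contG: "continuous_on {0..} G"
    and df: "\<And>t. t \<ge> 0 \<Longrightarrow> (f has_real_derivative f' t) (at t within {0..})"
    and df': "\<And>t. t \<ge> 0 \<Longrightarrow> (f' has_real_derivative f'' t) (at t within {0..})"
    and f_ode: "\<And>t. t \<ge> 0 \<Longrightarrow> f'' t + K t * f t = 0"
    and f_pos: "\<And>t. t > 0 \<Longrightarrow> f t > 0"
    and f_int: "(\<integral>\<^sup>+ t\<in>{1..}. ennreal (1 / (f t)\<^sup>2) \<partial>lborel) < \<infinity>"
    and dm: "\<And>t. t \<ge> 0 \<Longrightarrow> (m has_real_derivative m' t) (at t within {0..})"
    and dm': "\<And>t. t \<ge> 0 \<Longrightarrow> (m' has_real_derivative m'' t) (at t within {0..})"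
    and m_ode: "\<And>t. t \<ge> 0 \<Longrightarrow> m'' t + G t * m t = 0"
    and m0: "m 0 = f 0" and m'0: "m' 0 = f' 0"
    and ab: "1 \<le> a" "a \<le> b"
    and supp: "\<And>t. t \<ge> 0 \<Longrightarrow> t \<notin> {a..b} \<Longrightarrow> G t = K t"
    and alpha_fin: "bdd_above ((\<lambda>t. \<bar>sigma_fun m f t\<bar>) ` {0<..})"
  shows "(\<integral>\<^sup>+ t\<in>{a..b}. ennreal \<bar>G t * m t - K t * f t\<bar> \<partial>lborel)
           \<le> ennreal ((alpha_m m f + 1) * l2norm_on {0..} (\<lambda>t. G t - K t) * l2norm_on {a..b} f)
             + ennreal (alpha_m m f) * (\<integral>\<^sup>+ t\<in>{a..b}. ennreal \<bar>f'' t\<bar> \<partial>lborel)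
    \<and> (\<integral>\<^sup>+ t\<in>{b..}. ennreal \<bar>G t * m t - K t * f t\<bar> \<partial>lborel)
           \<le> ennreal (alpha_m m f) * (\<integral>\<^sup>+ t\<in>{b..}. ennreal \<bar>f'' t\<bar> \<partial>lborel)
    \<and> (\<integral>\<^sup>+ t\<in>{0..}. ennreal \<bar>G t * m t - K t * f t\<bar> \<partial>lborel)
           \<le> ennreal (alpha_m m f) * (\<integral>\<^sup>+ t\<in>{a..}. ennreal \<bar>f'' t\<bar> \<partial>lborel)
             + ennreal ((alpha_m m f + 1) * l2norm_on {0..} (\<lambda>t. G t - K t) * l2norm_on {a..b} f)"
  proof -
  define \<alpha> where "\<alpha> = alpha_m m f"
  have sb: "\<bar>sigma_fun m f t\<bar> \<le> \<alpha>" if "t > 0" for t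
    unfolding \<alpha>_def alpha_m_def by (rule cSUP_upper[OF _ alpha_fin]) (use that in auto)
  have \<alpha>0: "\<alpha> \<ge> 0" using sb[of 1] by linarith
  have contf: "continuous_on {0..} f" by (rule DERIV_continuous_on[OF df]) auto
  have contm: "continuous_on {0..} m" by (rule DERIV_continuous_on[OF dm]) auto
  have f''eq: "f'' t = - K t * f t" if "t \<ge> 0" for t using f_ode[OF that] by simp
  have mrep: "m t = f t * (1 + sigma_fun m f t)" if "t > 0" for t
    using f_pos[OF that] unfolding sigma_fun_def by (simp add: field_simps)
  have a0: "a > 0" "b > 0" using ab by auto
  have m_eq_f: "m t = f t" if "0 \<le> t" "t < a" for t
  proof (rule uniq_lem[OF contK df df' dm dm' _ m0 m'0 that])
    fix s assume s: "0 \<le> s" "s < a"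
    have "G s = K s" using supp[of s] s by auto
    then show "m'' s - f'' s = - K s * (m s - f s)"
      using m_ode[of s] f_ode[of s] s by (simp add: algebra_simps)
  qed
  have pw1: "\<bar>G t * m t - K t * f t\<bar> \<le> (1 + \<alpha>) * (\<bar>G t - K t\<bar> * f t) + \<alpha> * \<bar>f'' t\<bar>"
    if "t \<in> {a..b}" for t
  proof -
    have t0: "t > 0" using that a0 by auto
    define \<sigma> where "\<sigma> = sigma_fun m f t"
    have e: "G t * m t - K t * f t = (G t - K t) * f t * (1 + \<sigma>) - f'' t * \<sigma>"
      using mrep[OF t0] f''eq[of t] t0 unfolding \<sigma>_def by (simp add: algebra_simps)
    have "\<bar>(G t - K t) * f t * (1 + \<sigma>) - f'' t * \<sigma>\<bar> \<le> \<bar>(G t - K t) * f t * (1 + \<sigma>)\<bar> + \<bar>f'' t * \<sigma>\<bar>"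
      by (rule abs_triangle_ineq4)
    also have "\<bar>(G t - K t) * f t * (1 + \<sigma>)\<bar> = (\<bar>G t - K t\<bar> * f t) * \<bar>1 + \<sigma>\<bar>"
      using f_pos[OF t0] by (simp add: abs_mult)
    also have "\<dots> \<le> (\<bar>G t - K t\<bar> * f t) * (1 + \<alpha>)"
      using sb[OF t0] f_pos[OF t0] unfolding \<sigma>_def by (intro mult_left_mono) auto
    also have "\<bar>f'' t * \<sigma>\<bar> \<le> \<bar>f'' t\<bar> * \<alpha>"
      using sb[OF t0] unfolding \<sigma>_def by (simp add: abs_mult mult_left_mono)
    finally show ?thesis using e by (simp add: algebra_simps)
  qed
  have pw2: "\<bar>G t * m t - K t * f t\<bar> \<le> \<alpha> * \<bar>f'' t\<bar>" if "t > b" for t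
  proof -
    have t0: "t > 0" using that a0 by auto
    have "G t = K t" using supp[of t] that t0 by auto
    then have "G t * m t - K t * f t = - f'' t * sigma_fun m f t"
      using mrep[OF t0] f''eq[of t] t0 by (simp add: algebra_simps)
    moreover have "\<bar>f'' t\<bar> * \<bar>sigma_fun m f t\<bar> \<le> \<bar>f'' t\<bar> * \<alpha>"
      using sb[OF t0] by (intro mult_left_mono) auto
    ultimately show ?thesis by (simp add: abs_mult mult.commute)
  qed
  have contD: "continuous_on {0..} (\<lambda>t. \<bar>G t * m t - K t * f t\<bar>)"
    by (intro continuous_intros contG contm contK contf)
  have M_D: "(\<lambda>t. ennreal \<bar>G t * m t - K t * f t\<bar> * indicator {a..b} t) \<in> borel_measurable lborel"
    by (rule meas_lem[OF contD]) (use ab in auto)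
  have M_GK: "(\<lambda>t. ennreal (\<bar>G t - K t\<bar> * f t) * indicator {a..b} t) \<in> borel_measurable lborel"
  proof (rule meas_lem[where T="{0..}" and h="\<lambda>t. \<bar>G t - K t\<bar> * f t"])
    show "continuous_on {0..} (\<lambda>t. \<bar>G t - K t\<bar> * f t)"
      by (intro continuous_intros contG contK contf)
  qed (use ab in auto)
  have contKf: "continuous_on {0..} (\<lambda>t. \<bar>K t * f t\<bar>)"
    by (intro continuous_intros contK contf)
  have M_f'': "(\<lambda>t. ennreal \<bar>f'' t\<bar> * indicator S t) \<in> borel_measurable lborel"
    if "S \<in> sets borel" "S \<subseteq> {0..}" for S
  proof (rule meas_lem[OF contKf that])
    fix t assume "t \<in> S"
    then have "t \<ge> 0" using that by auto
    then show "\<bar>f'' t\<bar> = \<bar>K t * f t\<bar>" using f''eq by simp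
  qed
  have Mab: "(\<lambda>t. ennreal \<bar>f'' t\<bar> * indicator {a..b} t) \<in> borel_measurable lborel"
    by (rule M_f'') (use ab in auto)
  have Mb: "(\<lambda>t. ennreal \<bar>f'' t\<bar> * indicator {b..} t) \<in> borel_measurable lborel"
    by (rule M_f'') (use ab in auto)
  have Mb': "(\<lambda>t. ennreal \<bar>f'' t\<bar> * indicator {b<..} t) \<in> borel_measurable lborel"
    by (rule M_f'') (use ab in auto)
  have LG: "l2norm_on {0..} (\<lambda>t. G t - K t) = sqrt (LINT t:{a..b}|lborel. (G t - K t)\<^sup>2)"
    unfolding l2norm_on_def set_lebesgue_integral_def
    by (rule arg_cong[where f=sqrt], rule Bochner_Integration.integral_cong[OF refl])
       (use supp ab in \<open>auto simp: indicator_def\<close>)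
  have Lf: "l2norm_on {a..b} f = sqrt (LINT t:{a..b}|lborel. (f t)\<^sup>2)"
    unfolding l2norm_on_def ..
  define C where "C = (\<alpha> + 1) * l2norm_on {0..} (\<lambda>t. G t - K t) * l2norm_on {a..b} f"
  have CS: "(\<integral>\<^sup>+ t. ennreal (\<bar>G t - K t\<bar> * f t) * indicator {a..b} t \<partial>lborel)
      \<le> ennreal (l2norm_on {0..} (\<lambda>t. G t - K t) * l2norm_on {a..b} f)"
    unfolding LG Lf
  proof (rule cs_lem)
    have sub: "{a..b} \<subseteq> {0..}" using ab by auto
    show "continuous_on {a..b} (\<lambda>t. G t - K t)"
      by (rule continuous_on_subset[OF _ sub]) (intro continuous_intros contG contK)
    show "continuous_on {a..b} f" by (rule continuous_on_subset[OF contf sub])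
    show "\<And>t. t \<in> {a..b} \<Longrightarrow> 0 \<le> f t" using ab f_pos by (auto intro: less_imp_le)
  qed
  have L0: "l2norm_on {0..} (\<lambda>t. G t - K t) * l2norm_on {a..b} f \<ge> 0"
    unfolding l2norm_on_def set_lebesgue_integral_def
    by (intro mult_nonneg_nonneg real_sqrt_ge_zero Bochner_Integration.integral_nonneg) auto
  have P1: "(\<integral>\<^sup>+ t\<in>{a..b}. ennreal \<bar>G t * m t - K t * f t\<bar> \<partial>lborel)
      \<le> ennreal C + ennreal \<alpha> * (\<integral>\<^sup>+ t\<in>{a..b}. ennreal \<bar>f'' t\<bar> \<partial>lborel)"
  proof -
    have "(\<integral>\<^sup>+ t\<in>{a..b}. ennreal \<bar>G t * m t - K t * f t\<bar> \<partial>lborel)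
       \<le> (\<integral>\<^sup>+ t. ennreal (1 + \<alpha>) * (ennreal (\<bar>G t - K t\<bar> * f t) * indicator {a..b} t)
              + ennreal \<alpha> * (ennreal \<bar>f'' t\<bar> * indicator {a..b} t) \<partial>lborel)"
    proof (rule nn_integral_mono)
      fix t
      show "ennreal \<bar>G t * m t - K t * f t\<bar> * indicator {a..b} t
        \<le> ennreal (1 + \<alpha>) * (ennreal (\<bar>G t - K t\<bar> * f t) * indicator {a..b} t)
              + ennreal \<alpha> * (ennreal \<bar>f'' t\<bar> * indicator {a..b} t)"
      proof (cases "t \<in> {a..b}")
        case True
        have fp: "f t > 0" using True a0 f_pos by auto
        have "ennreal \<bar>G t * m t - K t * f t\<bar> \<le> ennreal ((1 + \<alpha>) * (\<bar>G t - K t\<bar> * f t) + \<alpha> * \<bar>f'' t\<bar>)"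
          by (rule ennreal_leI[OF pw1[OF True]])
        also have "\<dots> = ennreal ((1 + \<alpha>) * (\<bar>G t - K t\<bar> * f t)) + ennreal (\<alpha> * \<bar>f'' t\<bar>)"
          by (rule ennreal_plus) (use \<alpha>0 fp in auto)
        also have "\<dots> = ennreal (1 + \<alpha>) * ennreal (\<bar>G t - K t\<bar> * f t) + ennreal \<alpha> * ennreal \<bar>f'' t\<bar>"
          using \<alpha>0 fp by (simp add: ennreal_mult)
        finally show ?thesis using True by simp
      qed simp
    qed
    also have "\<dots> = ennreal (1 + \<alpha>) * (\<integral>\<^sup>+ t. ennreal (\<bar>G t - K t\<bar> * f t) * indicator {a..b} t \<partial>lborel)
          + ennreal \<alpha> * (\<integral>\<^sup>+ t\<in>{a..b}. ennreal \<bar>f'' t\<bar> \<partial>lborel)"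
    proof -
      have m1: "(\<lambda>t. ennreal (1 + \<alpha>) * (ennreal (\<bar>G t - K t\<bar> * f t) * indicator {a..b} t)) \<in> borel_measurable lborel"
        by (intro borel_measurable_times_ennreal borel_measurable_const M_GK)
      have m2: "(\<lambda>t. ennreal \<alpha> * (ennreal \<bar>f'' t\<bar> * indicator {a..b} t)) \<in> borel_measurable lborel"
        by (intro borel_measurable_times_ennreal borel_measurable_const Mab)
      show ?thesis
        by (simp only: nn_integral_add[OF m1 m2] nn_integral_cmult[OF M_GK] nn_integral_cmult[OF Mab])
    qed
    also have "\<dots> \<le> ennreal (1 + \<alpha>) * ennreal (l2norm_on {0..} (\<lambda>t. G t - K t) * l2norm_on {a..b} f)
          + ennreal \<alpha> * (\<integral>\<^sup>+ t\<in>{a..b}. ennreal \<bar>f'' t\<bar> \<partial>lborel)"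
      by (intro add_right_mono mult_left_mono CS) simp
    also have "ennreal (1 + \<alpha>) * ennreal (l2norm_on {0..} (\<lambda>t. G t - K t) * l2norm_on {a..b} f) = ennreal C"
    proof -
      have "C = (1 + \<alpha>) * (l2norm_on {0..} (\<lambda>t. G t - K t) * l2norm_on {a..b} f)"
        unfolding C_def by (simp add: algebra_simps)
      then show ?thesis using \<alpha>0 L0 by (simp add: ennreal_mult)
    qed
    finally show ?thesis .
  qed
  have P2: "(\<integral>\<^sup>+ t\<in>{b..}. ennreal \<bar>G t * m t - K t * f t\<bar> \<partial>lborel)
      \<le> ennreal \<alpha> * (\<integral>\<^sup>+ t\<in>{b..}. ennreal \<bar>f'' t\<bar> \<partial>lborel)"
  proof -
    have "(\<integral>\<^sup>+ t\<in>{b..}. ennreal \<bar>G t * m t - K t * f t\<bar> \<partial>lborel)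
        \<le> (\<integral>\<^sup>+ t. ennreal \<alpha> * (ennreal \<bar>f'' t\<bar> * indicator {b..} t) \<partial>lborel)"
    proof (rule nn_integral_mono_AE)
      show "AE t in lborel. ennreal \<bar>G t * m t - K t * f t\<bar> * indicator {b..} t
          \<le> ennreal \<alpha> * (ennreal \<bar>f'' t\<bar> * indicator {b..} t)"
        using AE_lborel_singleton[of b]
      proof eventually_elim
        case (elim t)
        show ?case
        proof (cases "t > b")
          case True
          have "ennreal \<bar>G t * m t - K t * f t\<bar> \<le> ennreal (\<alpha> * \<bar>f'' t\<bar>)"
            by (rule ennreal_leI[OF pw2[OF True]])
          then show ?thesis using True \<alpha>0 by (simp add: ennreal_mult)
        next
          case False
          then have "t \<notin> {b..}" using elim by auto
          then show ?thesis by simp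
        qed
      qed
    qed
    also have "\<dots> = ennreal \<alpha> * (\<integral>\<^sup>+ t\<in>{b..}. ennreal \<bar>f'' t\<bar> \<partial>lborel)"
      by (rule nn_integral_cmult[OF Mb])
    finally show ?thesis .
  qed
  have P3: "(\<integral>\<^sup>+ t\<in>{0..}. ennreal \<bar>G t * m t - K t * f t\<bar> \<partial>lborel)
      \<le> ennreal \<alpha> * (\<integral>\<^sup>+ t\<in>{a..}. ennreal \<bar>f'' t\<bar> \<partial>lborel) + ennreal C"
  proof -
    have "(\<integral>\<^sup>+ t\<in>{0..}. ennreal \<bar>G t * m t - K t * f t\<bar> \<partial>lborel)
        \<le> (\<integral>\<^sup>+ t. ennreal \<bar>G t * m t - K t * f t\<bar> * indicator {a..b} t
              + ennreal \<alpha> * (ennreal \<bar>f'' t\<bar> * indicator {b<..} t) \<partial>lborel)"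
    proof (rule nn_integral_mono)
      fix t
      show "ennreal \<bar>G t * m t - K t * f t\<bar> * indicator {0..} t
        \<le> ennreal \<bar>G t * m t - K t * f t\<bar> * indicator {a..b} t
              + ennreal \<alpha> * (ennreal \<bar>f'' t\<bar> * indicator {b<..} t)"
      proof (cases "t \<ge> 0")
        case t0: True
        show ?thesis
        proof (cases "t < a")
          case True
          have "G t = K t" using supp[of t] True t0 by auto
          then have "G t * m t - K t * f t = 0" using m_eq_f[OF t0 True] by simp
          then show ?thesis by simp
        next
          case ta: False
          show ?thesis
          proof (cases "t \<le> b")
            case True
            then show ?thesis using ta t0 by simp
          next
            case False
            then have tb: "t > b" by simp
            have "ennreal \<bar>G t * m t - K t * f t\<bar> \<le> ennreal (\<alpha> * \<bar>f'' t\<bar>)"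
              by (rule ennreal_leI[OF pw2[OF tb]])
            then show ?thesis using tb t0 \<alpha>0 by (simp add: ennreal_mult)
          qed
        qed
      qed simp
    qed
    also have "\<dots> = (\<integral>\<^sup>+ t\<in>{a..b}. ennreal \<bar>G t * m t - K t * f t\<bar> \<partial>lborel)
          + ennreal \<alpha> * (\<integral>\<^sup>+ t\<in>{b<..}. ennreal \<bar>f'' t\<bar> \<partial>lborel)"
    proof -
      have m2: "(\<lambda>t. ennreal \<alpha> * (ennreal \<bar>f'' t\<bar> * indicator {b<..} t)) \<in> borel_measurable lborel"
        by (intro borel_measurable_times_ennreal borel_measurable_const Mb')
      show ?thesis
        by (simp only: nn_integral_add[OF M_D m2] nn_integral_cmult[OF Mb'])
    qed
    also have "\<dots> \<le> ennreal C + ennreal \<alpha> * (\<integral>\<^sup>+ t\<in>{a..b}. ennreal \<bar>f'' t\<bar> \<partial>lborel)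
          + ennreal \<alpha> * (\<integral>\<^sup>+ t\<in>{b<..}. ennreal \<bar>f'' t\<bar> \<partial>lborel)"
      by (intro add_right_mono P1)
    also have "\<dots> = ennreal \<alpha> * ((\<integral>\<^sup>+ t\<in>{a..b}. ennreal \<bar>f'' t\<bar> \<partial>lborel)
          + (\<integral>\<^sup>+ t\<in>{b<..}. ennreal \<bar>f'' t\<bar> \<partial>lborel)) + ennreal C"
      by (simp only: distrib_left add_ac)
    also have "(\<integral>\<^sup>+ t\<in>{a..b}. ennreal \<bar>f'' t\<bar> \<partial>lborel) + (\<integral>\<^sup>+ t\<in>{b<..}. ennreal \<bar>f'' t\<bar> \<partial>lborel)
        = (\<integral>\<^sup>+ t. ennreal \<bar>f'' t\<bar> * indicator {a..b} t + ennreal \<bar>f'' t\<bar> * indicator {b<..} t \<partial>lborel)"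
      by (rule nn_integral_add[OF Mab Mb', symmetric])
    also have "\<dots> = (\<integral>\<^sup>+ t\<in>{a..}. ennreal \<bar>f'' t\<bar> \<partial>lborel)"
      by (rule nn_integral_cong) (use ab in \<open>auto simp: indicator_def\<close>)
    finally show ?thesis .
  qed
  show ?thesis using P1 P2 P3 unfolding C_def \<alpha>_def by simp
qed

end
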